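(* For $\rho\in(0,1)$ and $\alpha\in\{1/2,1\}$, \[ \mathbf M(\Lambda;\rho,\rho,\alpha)=\rho(2-\rho)+(1-\rho)\Bigl[\rho\Lambda^2+\alpha(1-\rho)\bigl(Q_2(\Lambda)-2\Lambda Q_1(\Lambda)+\Lambda^2Q_0(\Lambda)\bigr)\Bigr], \] where, for $0\le x\le 2$, \[ Q_0(x)=\frac1\pi\int_x^2\sqrt{4-t^2}\,dt=1-\frac{x}{2\pi}\sqrt{4-x^2}-\frac2\pi\arctan\Bigl(\frac{x}{\sqrt{4-x^2}}\Bigr), \] \[ Q_1(x)=\frac1\pi\int_x^2t\sqrt{4-t^2}\,dt=\frac{1}{3\pi}(4-x^2)^{3/2}, \] \[ Q_2(x)=\frac1\pi\int_x^2t^2\sqrt{4-t^2}\,dt=1-\frac{1}{4\pi}x\sqrt{4-x^2}(x^2-2)-\frac2\pi\arcsin\Bigl(\frac x2\Bigr). \] Moreover, the minimizer over $\Lambda$ of $\mathbf M(\Lambda;\rho,\rho,\alpha)$ equals $2\sin(\theta_\alpha(\rho))$, where $\theta_\alpha(\rho)\in[0,\pi/2]$ is the unique solution of \[ \theta+\cot(\theta)\Bigl(1-\tfrac13\cos^2\theta\Bigr)=\frac{\pi(1+\alpha^{-1}\rho-\rho)}{2(1-\rho)}, \] and the left-hand side of this equation is a decreasing function of $\theta$.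
   Context: For $\gamma>0$, $\gamma_\pm=(1\pm\sqrt\gamma)^2$, the Marčenko–Pastur density is $p_\gamma(t)=\frac{1}{2\pi\gamma t}\sqrt{(\gamma_+-t)(t-\gamma_-)}\mathbf 1_{[\gamma_-,\gamma_+]}(t)$ and $P_\gamma(x;k)=\int_x^{\gamma_+}t^kp_\gamma(t)\,dt$. For $\alpha\in\{1/2,1\}$, \[ \mathbf M(\Lambda;\rho,\tilde\rho,\alpha)=\rho+\tilde\rho-\rho\tilde\rho+(1-\tilde\rho)\Bigl[\rho\Lambda^2+\alpha(1-\rho)\bigl(P_\gamma(\Lambda^2;1)-2\Lambda P_\gamma(\Lambda^2;\tfrac12)+\Lambda^2P_\gamma(\Lambda^2;0)\bigr)\Bigr], \] with $\gamma=(\tilde\rho-\rho\tilde\rho)/(\rho-\rho\tilde\rho)$; here $\tilde\rho=\rho$ (square case), so $\gamma=1$. *)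

theory Defs
  imports "HOL-Analysis.Analysis"
begin

definition gamma_plus :: "real \<Rightarrow> real" where
  "gamma_plus \<gamma> = (1 + sqrt \<gamma>)\<^sup>2"

definition gamma_minus :: "real \<Rightarrow> real" where
  "gamma_minus \<gamma> = (1 - sqrt \<gamma>)\<^sup>2"

definition mp_density :: "real \<Rightarrow> real \<Rightarrow> real" where
  "mp_density \<gamma> t =
     (1 / (2 * pi * \<gamma> * t)) * sqrt ((gamma_plus \<gamma> - t) * (t - gamma_minus \<gamma>))
       * indicator {gamma_minus \<gamma>..gamma_plus \<gamma>} t"

definition mp_P :: "real \<Rightarrow> real \<Rightarrow> real \<Rightarrow> real" where
  "mp_P \<gamma> x k = integral {x..gamma_plus \<gamma>} (\<lambda>t. t powr k * mp_density \<gamma> t)"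

definition M_risk :: "real \<Rightarrow> real \<Rightarrow> real \<Rightarrow> real \<Rightarrow> real" where
  "M_risk \<Lambda> \<rho> \<rho>t \<alpha> =
     (let \<gamma> = (\<rho>t - \<rho> * \<rho>t) / (\<rho> - \<rho> * \<rho>t) in
      \<rho> + \<rho>t - \<rho> * \<rho>t + (1 - \<rho>t) *
        (\<rho> * \<Lambda>\<^sup>2 + \<alpha> * (1 - \<rho>) *
          (mp_P \<gamma> (\<Lambda>\<^sup>2) 1 - 2 * \<Lambda> * mp_P \<gamma> (\<Lambda>\<^sup>2) (1/2)
           + \<Lambda>\<^sup>2 * mp_P \<gamma> (\<Lambda>\<^sup>2) 0)))"

definition Q0 :: "real \<Rightarrow> real" where
  "Q0 x = (1 / pi) * integral {x..2} (\<lambda>t. sqrt (4 - t\<^sup>2))"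

definition Q1 :: "real \<Rightarrow> real" where
  "Q1 x = (1 / pi) * integral {x..2} (\<lambda>t. t * sqrt (4 - t\<^sup>2))"

definition Q2 :: "real \<Rightarrow> real" where
  "Q2 x = (1 / pi) * integral {x..2} (\<lambda>t. t\<^sup>2 * sqrt (4 - t\<^sup>2))"

end

theory Submission
  imports Defs
begin
definition S :: "real \<Rightarrow> real" where "S t = sqrt(4-t^2)"
definition AS :: "real \<Rightarrow> real" where "AS t = arcsin(t/2)"
definition A0 :: "real \<Rightarrow> real" where "A0 t = t * S t/2 + 2 * AS t"
definition A1 :: "real \<Rightarrow> real" where "A1 t = -((4-t^2) * S t)/3"
definition A2 :: "real \<Rightarrow> real" where "A2 t = t * S t * (t^2-2)/4 + 2 * AS t"

lemma sq_aux: assumes "-2<t" "t<2" shows "(0::real) < 4 - t^2"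
proof -
  have "4 - t^2 = (2-t)*(2+t)" by (simp add: algebra_simps power2_eq_square)
  also have "... > 0" using assms by (intro mult_pos_pos) auto
  finally show ?thesis .
qed

lemma sq_aux2: assumes "-2\<le>t" "t\<le>2" shows "(0::real) \<le> 4 - t^2"
proof -
  have "4 - t^2 = (2-t)*(2+t)" by (simp add: algebra_simps power2_eq_square)
  also have "... \<ge> 0" using assms by (intro mult_nonneg_nonneg) auto
  finally show ?thesis .
qed

lemma S_sq: "-2 \<le> t \<Longrightarrow> t \<le> 2 \<Longrightarrow> S t ^2 = 4 - t^2"
  unfolding S_def using sq_aux2 by simp

lemma D_S: assumes "-2<t" "t<2" shows "(S has_real_derivative -t / S t) (at t)"
proof -
  have p: "0 < 4-t^2" using sq_aux assms by blast
  have "((\<lambda>t. 4 - t^2) has_real_derivative -(2*t)) (at t)" by (auto intro!: derivative_eq_intros)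
  from DERIV_chain2[OF DERIV_real_sqrt[OF p] this]
  show ?thesis unfolding S_def[abs_def] by (rule DERIV_cong) (simp add: field_simps)
qed

lemma D_AS: assumes "-2<t" "t<2" shows "(AS has_real_derivative 1 / S t) (at t)"
proof -
  have a: "-1 < t/2" "t/2 < 1" using assms by auto
  have p: "0 < 4-t^2" using sq_aux assms by blast
  have "((\<lambda>t. t/2) has_real_derivative 1/2) (at t)" by (auto intro!: derivative_eq_intros)
  from DERIV_chain2[OF DERIV_arcsin[OF a] this]
  have "(AS has_real_derivative inverse (sqrt (1 - (t/2)^2)) * (1/2)) (at t)" unfolding AS_def[abs_def] .
  moreover have "1 - (t/2)^2 = (4-t^2)/4" by (simp add: field_simps power2_eq_square)
  ultimately show ?thesis unfolding S_def by (simp add: real_sqrt_divide field_simps)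
qed

lemma A0_deriv: assumes "-2<t" "t<2" shows "(A0 has_real_derivative S t) (at t)"
proof -
  have p: "0 < S t" unfolding S_def using sq_aux assms by simp
  have "(A0 has_real_derivative (1 * S t + (-t / S t) * t)/2 + 2 * (1 / S t)) (at t)"
    unfolding A0_def[abs_def]
    using D_S[OF assms] D_AS[OF assms] by (intro derivative_eq_intros refl) auto
  moreover have "(1 * S t + (-t / S t) * t)/2 + 2 * (1 / S t) = S t"
    using p S_sq[of t] assms by (simp add: field_simps power2_eq_square)
  ultimately show ?thesis by simp
qed

lemma A1_deriv: assumes "-2<t" "t<2" shows "(A1 has_real_derivative t * S t) (at t)"
proof -
  have p: "0 < S t" unfolding S_def using sq_aux assms by simp
  have "(A1 has_real_derivative -((-(2*t)) * S t + (-t / S t) * (4-t^2))/3) (at t)"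
    unfolding A1_def[abs_def]
    using D_S[OF assms] D_AS[OF assms] by (intro derivative_eq_intros refl) auto
  moreover have "-((-(2*t)) * S t + (-t / S t) * (4-t^2))/3 = t * S t"
  proof -
    have h: "S t * S t = 4 - t*t" using S_sq[of t] assms by (simp add: power2_eq_square)
    have h2: "\<And>c. S t * (S t * c) = (4 - t*t) * c" using h by (metis mult.assoc)
    show ?thesis using p by (simp add: field_simps power2_eq_square) (simp only: h h2, simp add: algebra_simps)
  qed
  ultimately show ?thesis by simp
qed

lemma A2_deriv: assumes "-2<t" "t<2" shows "(A2 has_real_derivative t^2 * S t) (at t)"
proof -
  have p: "0 < S t" unfolding S_def using sq_aux assms by simp
  have "(A2 has_real_derivative ((1 * S t + (-t / S t) * t) * (t^2-2) + (2*t) * (t * S t))/4 + 2 * (1 / S t)) (at t)"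
    unfolding A2_def[abs_def]
    using D_S[OF assms] D_AS[OF assms] by (intro derivative_eq_intros refl) auto
  moreover have "((1 * S t + (-t / S t) * t) * (t^2-2) + (2*t) * (t * S t))/4 + 2 * (1 / S t) = t^2 * S t"
  proof -
    have h: "S t * S t = 4 - t*t" using S_sq[of t] assms by (simp add: power2_eq_square)
    have h2: "\<And>c. S t * (S t * c) = (4 - t*t) * c" using h by (metis mult.assoc)
    show ?thesis using p by (simp add: field_simps power2_eq_square) (simp only: h h2, simp add: algebra_simps)
  qed
  ultimately show ?thesis by simp
qed

lemma cont_A0: "continuous_on {-2..2} A0"
  unfolding A0_def[abs_def] S_def AS_def by (intro continuous_intros) auto
lemma cont_A1: "continuous_on {-2..2} A1"
  unfolding A1_def[abs_def] S_def by (intro continuous_intros) auto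
lemma cont_A2: "continuous_on {-2..2} A2"
  unfolding A2_def[abs_def] S_def AS_def by (intro continuous_intros) auto

lemma A0_2: "A0 2 = pi" unfolding A0_def S_def AS_def by simp
lemma A1_2: "A1 2 = 0" unfolding A1_def S_def by simp
lemma A2_2: "A2 2 = pi" unfolding A2_def S_def AS_def by simp

lemma ftc_A:
  assumes cont: "continuous_on {-2..2} A" and der: "\<And>t. -2<t \<Longrightarrow> t<2 \<Longrightarrow> (A has_real_derivative f t) (at t)"
    and x: "-2 \<le> x" "x \<le> 2"
  shows "(f has_integral (A 2 - A x)) {x..2}"
proof (rule fundamental_theorem_of_calculus_interior)
  show "x \<le> 2" by fact
  show "continuous_on {x..2} A" using cont by (rule continuous_on_subset) (use x in auto)
  fix t assume "t \<in> {x<..<2}"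
  then show "(A has_vector_derivative f t) (at t)"
    using der[of t] x by (auto simp: has_real_derivative_iff_has_vector_derivative)
qed

lemma Q0_eq: "0 \<le> x \<Longrightarrow> x \<le> 2 \<Longrightarrow> Q0 x = (A0 2 - A0 x) / pi"
  unfolding Q0_def using ftc_A[OF cont_A0 A0_deriv, of x] by (simp add: S_def[abs_def] integral_unique)
lemma Q1_eq: "0 \<le> x \<Longrightarrow> x \<le> 2 \<Longrightarrow> Q1 x = (A1 2 - A1 x) / pi"
  unfolding Q1_def using ftc_A[OF cont_A1 A1_deriv, of x] by (simp add: S_def[abs_def] integral_unique)
lemma Q2_eq: "0 \<le> x \<Longrightarrow> x \<le> 2 \<Longrightarrow> Q2 x = (A2 2 - A2 x) / pi"
  unfolding Q2_def using ftc_A[OF cont_A2 A2_deriv, of x] by (simp add: S_def[abs_def] integral_unique)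

lemma Q0_nonneg: "0 \<le> x \<Longrightarrow> x \<le> 2 \<Longrightarrow> 0 \<le> (A0 2 - A0 x) / pi"
proof -
  assume x: "0 \<le> x" "x \<le> 2"
  have "0 \<le> A0 2 - A0 x"
    by (rule has_integral_nonneg[OF ftc_A[OF cont_A0 A0_deriv, of x]]) (use x sq_aux2 in \<open>auto simp: S_def\<close>)
  then show ?thesis by simp
qed

lemma Q_big: "x > 2 \<Longrightarrow> Q0 x = 0 \<and> Q1 x = 0 \<and> Q2 x = 0"
  unfolding Q0_def Q1_def Q2_def by simp

lemma gp1: "gamma_plus 1 = 4" by (simp add: gamma_plus_def)
lemma gm1: "gamma_minus 1 = 0" by (simp add: gamma_minus_def)

lemma ftc_P:
  assumes cont: "continuous_on {-2..2} A" and der: "\<And>t. -2<t \<Longrightarrow> t<2 \<Longrightarrow> (A has_real_derivative f t) (at t)"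
    and x: "0 \<le> x" "x \<le> 4"
    and fe: "\<And>t. 0 < t \<Longrightarrow> t < 4 \<Longrightarrow> g t = f (sqrt t) / (2 * pi * sqrt t)"
  shows "(g has_integral ((A 2 - A (sqrt x)) / pi)) {x..4}"
proof -
  have "(g has_integral (A (sqrt 4) / pi - A (sqrt x) / pi)) {x..4}"
  proof (rule fundamental_theorem_of_calculus_interior[where f="\<lambda>t. A (sqrt t) / pi"])
    show "x \<le> 4" by fact
    have "continuous_on {x..4} sqrt" by (intro continuous_intros)
    moreover have "sqrt ` {x..4} \<subseteq> {-2..2}"
    proof
      fix y assume "y \<in> sqrt ` {x..4}"
      then obtain t where t: "t \<in> {x..4}" "y = sqrt t" by auto
      have "sqrt t \<le> 2" using t real_sqrt_le_mono[of t 4] by simp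
      moreover have "0 \<le> sqrt t" using t x by simp
      ultimately show "y \<in> {-2..2}" unfolding t(2) atLeastAtMost_iff by linarith
    qed
    ultimately have "continuous_on {x..4} (A \<circ> sqrt)"
      by (intro continuous_on_compose) (auto intro: continuous_on_subset[OF cont])
    then show "continuous_on {x..4} (\<lambda>t. A (sqrt t) / pi)" by (auto simp: o_def intro!: continuous_intros)
    fix t assume t: "t \<in> {x<..<4}"
    then have t0: "0 < t" "t < 4" using x by auto
    have h1: "sqrt t < 2" using t0 real_sqrt_less_mono[of t 4] by simp
    have h2: "0 < sqrt t" using t0 by simp
    have st: "-2 < sqrt t" "sqrt t < 2" using h1 h2 by linarith+
    have dd: "((\<lambda>t. A (sqrt t) / pi) has_real_derivative (f (sqrt t) * (inverse (sqrt t) / 2)) / pi) (at t)"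
      by (intro DERIV_cdivide DERIV_chain2[OF der[OF st] DERIV_real_sqrt[OF t0(1)]])
    show "((\<lambda>t. A (sqrt t) / pi) has_vector_derivative g t) (at t)"
    proof -
      have "(f (sqrt t) * (inverse (sqrt t) / 2)) / pi = g t" unfolding fe[OF t0] by (simp add: field_simps)
      with dd show ?thesis by (simp add: has_real_derivative_iff_has_vector_derivative)
    qed
  qed
  then show ?thesis by (simp add: diff_divide_distrib)
qed

lemma sqrt4: "sqrt 4 = (2::real)"
  by simp

definition q0 :: "real \<Rightarrow> real" where "q0 x = (A0 2 - A0 x) / pi"
definition q1 :: "real \<Rightarrow> real" where "q1 x = (A1 2 - A1 x) / pi"
definition q2 :: "real \<Rightarrow> real" where "q2 x = (A2 2 - A2 x) / pi"

lemma dens1: assumes "0 < t" "t < 4" shows "mp_density 1 t = sqrt (4 - t) / (2 * pi * sqrt t)"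
proof -
  have i: "indicator {gamma_minus 1..gamma_plus 1} t = (1::real)" using assms by (simp add: gp1 gm1)
  have "sqrt ((4 - t) * (t - 0)) = sqrt (4-t) * sqrt t" by (simp add: real_sqrt_mult)
  moreover have gen: "\<And>u a. u > 0 \<Longrightarrow> 1/(2*pi*1*(u*u)) * (a*u) = a/(2*pi*u)" by (simp add: field_simps)
  ultimately have "1 / (2 * pi * 1 * t) * sqrt ((4 - t) * (t - 0)) = sqrt (4 - t) / (2 * pi * sqrt t)"
    using gen[of "sqrt t" "sqrt (4-t)"] assms by simp
  then show ?thesis unfolding mp_density_def i by (simp add: gp1 gm1)
qed

lemma S_sqrt: "0 < t \<Longrightarrow> S (sqrt t) = sqrt (4 - t)"
  unfolding S_def by simp

lemma P0: "0 \<le> x \<Longrightarrow> x \<le> 4 \<Longrightarrow> mp_P 1 x 0 = q0 (sqrt x)"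
  unfolding mp_P_def gp1 q0_def
  by (rule integral_unique, rule ftc_P[OF cont_A0 A0_deriv]) (auto simp: dens1 S_sqrt)
lemma P1: "0 \<le> x \<Longrightarrow> x \<le> 4 \<Longrightarrow> mp_P 1 x (1/2) = q1 (sqrt x)"
  unfolding mp_P_def gp1 q1_def
  by (rule integral_unique, rule ftc_P[OF cont_A1 A1_deriv]) (auto simp: dens1 S_sqrt powr_half_sqrt)
lemma P2: "0 \<le> x \<Longrightarrow> x \<le> 4 \<Longrightarrow> mp_P 1 x 1 = q2 (sqrt x)"
  unfolding mp_P_def gp1 q2_def
  by (rule integral_unique, rule ftc_P[OF cont_A2 A2_deriv]) (auto simp: dens1 S_sqrt)

lemma Pbig: "x > 4 \<Longrightarrow> mp_P 1 x k = 0"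
  unfolding mp_P_def gp1 by simp

lemma absle: "\<bar>y::real\<bar> \<le> 2 \<longleftrightarrow> y^2 \<le> 4"
  using abs_le_square_iff[of y 2] by simp

lemma PQ0: "mp_P 1 (y^2) 0 = Q0 \<bar>y\<bar>"
proof (cases "\<bar>y\<bar> \<le> 2")
  case True then show ?thesis using P0[of "y^2"] Q0_eq[of "\<bar>y\<bar>"] absle[of y] by (simp add: q0_def)
next
  case False then show ?thesis using Pbig[of "y^2"] Q_big[of "\<bar>y\<bar>"] absle[of y] by simp
qed
lemma PQ1: "mp_P 1 (y^2) (1/2) = Q1 \<bar>y\<bar>"
proof (cases "\<bar>y\<bar> \<le> 2")
  case True then show ?thesis using P1[of "y^2"] Q1_eq[of "\<bar>y\<bar>"] absle[of y] by (simp add: q1_def)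
next
  case False then show ?thesis using Pbig[of "y^2"] Q_big[of "\<bar>y\<bar>"] absle[of y] by simp
qed
lemma PQ2: "mp_P 1 (y^2) 1 = Q2 \<bar>y\<bar>"
proof (cases "\<bar>y\<bar> \<le> 2")
  case True then show ?thesis using P2[of "y^2"] Q2_eq[of "\<bar>y\<bar>"] absle[of y] by (simp add: q2_def)
next
  case False then show ?thesis using Pbig[of "y^2"] Q_big[of "\<bar>y\<bar>"] absle[of y] by simp
qed

lemma M_eq:
  assumes "0 < \<rho>" "\<rho> < 1"
  shows "M_risk L \<rho> \<rho> \<alpha> = \<rho> * (2 - \<rho>) + (1 - \<rho>) * (\<rho> * L\<^sup>2 + \<alpha> * (1 - \<rho>) *
          (Q2 \<bar>L\<bar> - 2 * L * Q1 \<bar>L\<bar> + L\<^sup>2 * Q0 \<bar>L\<bar>))"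
proof -
  have "\<rho> - \<rho> * \<rho> \<noteq> 0" using assms by (metis diff_gt_0_iff_gt less_irrefl mult_less_cancel_left_pos mult.right_neutral)
  then have g: "(\<rho> - \<rho> * \<rho>) / (\<rho> - \<rho> * \<rho>) = 1" by simp
  show ?thesis unfolding M_risk_def Let_def g PQ0 PQ1 PQ2 by (simp add: algebra_simps)
qed

lemma dq0: "-2<x \<Longrightarrow> x<2 \<Longrightarrow> (q0 has_real_derivative - S x / pi) (at x)"
  unfolding q0_def[abs_def] by (rule DERIV_cong[OF DERIV_cdivide[OF DERIV_diff[OF DERIV_const A0_deriv]]]) auto
lemma dq1: "-2<x \<Longrightarrow> x<2 \<Longrightarrow> (q1 has_real_derivative - (x * S x) / pi) (at x)"
  unfolding q1_def[abs_def] by (rule DERIV_cong[OF DERIV_cdivide[OF DERIV_diff[OF DERIV_const A1_deriv]]]) auto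
lemma dq2: "-2<x \<Longrightarrow> x<2 \<Longrightarrow> (q2 has_real_derivative - (x^2 * S x) / pi) (at x)"
  unfolding q2_def[abs_def] by (rule DERIV_cong[OF DERIV_cdivide[OF DERIV_diff[OF DERIV_const A2_deriv]]]) auto

lemma cq0: "continuous_on {0..2} q0"
  unfolding q0_def[abs_def] by (intro continuous_intros continuous_on_subset[OF cont_A0]) auto
lemma cq1: "continuous_on {0..2} q1"
  unfolding q1_def[abs_def] by (intro continuous_intros continuous_on_subset[OF cont_A1]) auto
lemma cq2: "continuous_on {0..2} q2"
  unfolding q2_def[abs_def] by (intro continuous_intros continuous_on_subset[OF cont_A2]) auto

definition Fq :: "real \<Rightarrow> real \<Rightarrow> real \<Rightarrow> real" where
  "Fq r c L = r * L^2 + c * (q2 L - 2 * L * q1 L + L^2 * q0 L)"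
definition Dq :: "real \<Rightarrow> real \<Rightarrow> real \<Rightarrow> real" where
  "Dq r c L = 2 * r * L + c * (-2 * q1 L + 2 * L * q0 L)"

lemma dFq: assumes "-2<x" "x<2" shows "(Fq r c has_real_derivative Dq r c x) (at x)"
  unfolding Fq_def[abs_def]
  apply (rule DERIV_cong)
   apply (rule derivative_eq_intros dq0[OF assms] dq1[OF assms] dq2[OF assms] refl)+
  apply (simp add: Dq_def algebra_simps power2_eq_square)
  done

lemma dDq: assumes "-2<x" "x<2" shows "(Dq r c has_real_derivative 2 * r + 2 * c * q0 x) (at x)"
  unfolding Dq_def[abs_def]
  apply (rule DERIV_cong)
   apply (rule derivative_eq_intros dq0[OF assms] dq1[OF assms] refl)+
  apply (simp add: algebra_simps power2_eq_square)
  done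

lemma cFq: "continuous_on {0..2} (Fq r c)"
  unfolding Fq_def[abs_def] by (intro continuous_intros cq0 cq1 cq2)
lemma cDq: "continuous_on {0..2} (Dq r c)"
  unfolding Dq_def[abs_def] by (intro continuous_intros cq0 cq1 cq2)

lemma q0_nn: "0 \<le> x \<Longrightarrow> x \<le> 2 \<Longrightarrow> 0 \<le> q0 x"
  unfolding q0_def by (rule Q0_nonneg)

lemma Dq_mono: assumes r: "r > 0" and c: "c > 0" and ab: "0 \<le> a" "a < b" "b \<le> 2"
  shows "Dq r c a < Dq r c b"
proof (rule DERIV_pos_imp_increasing_open[OF ab(2)])
  fix x assume x: "a < x" "x < b"
  have "0 \<le> q0 x" using x ab by (intro q0_nn) auto
  then have "2 * r + 2 * c * q0 x > 0" using r c by (simp add: add_pos_nonneg)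
  then show "\<exists>y. (Dq r c has_real_derivative y) (at x) \<and> 0 < y"
    using dDq[of x r c] x ab by (intro exI[of _ "2 * r + 2 * c * q0 x"]) auto
next
  show "continuous_on {a..b} (Dq r c)" using ab by (intro continuous_on_subset[OF cDq]) auto
qed

lemma Fq_min: assumes r: "r > 0" and c: "c > 0" and Ls: "0 < Ls" "Ls < 2" and D0: "Dq r c Ls = 0"
  and L: "0 \<le> L" "L \<le> 2" "L \<noteq> Ls"
  shows "Fq r c Ls < Fq r c L"
proof (cases "Ls < L")
  case True
  show ?thesis
  proof (rule DERIV_pos_imp_increasing_open[OF True])
    fix x assume x: "Ls < x" "x < L"
    have "Dq r c Ls < Dq r c x" using x L Ls by (intro Dq_mono r c) auto
    then show "\<exists>y. (Fq r c has_real_derivative y) (at x) \<and> 0 < y"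
      using dFq[of x r c] x L Ls D0 by (intro exI[of _ "Dq r c x"]) auto
  next
    show "continuous_on {Ls..L} (Fq r c)" using L Ls by (intro continuous_on_subset[OF cFq]) auto
  qed
next
  case False
  then have lt: "L < Ls" using L by auto
  show ?thesis
  proof (rule DERIV_neg_imp_decreasing_open[OF lt])
    fix x assume x: "L < x" "x < Ls"
    have "Dq r c x < Dq r c Ls" using x L Ls by (intro Dq_mono r c) auto
    then show "\<exists>y. (Fq r c has_real_derivative y) (at x) \<and> y < 0"
      using dFq[of x r c] x L Ls D0 by (intro exI[of _ "Dq r c x"]) auto
  next
    show "continuous_on {L..Ls} (Fq r c)" using L Ls by (intro continuous_on_subset[OF cFq]) auto
  qed
qed

lemma alg2:
  fixes s co p r c th :: real
  assumes s: "s > 0" and c: "c > 0" and p: "p > 0" and cs: "co^2 = 1 - s^2"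
    and th: "th = p/2 + p*r/(2*c) - (co/s)*(1 - co^2/3)"
  shows "4*r* s + c*(-2*((4*co^2*(2*co)/3)/p) + 2*(2* s)*((p - (2* s*(2*co)/2 + 2*th))/p)) = 0"
proof -
  have e1: "p - (2* s*(2*co)/2 + 2*th) = (- 2* s^2*co - s*p*r/c + 2*co - 2*co^3/3)/s"
    unfolding th using s c by (simp add: field_simps power2_eq_square power3_eq_cube)
  have e2: "- 2* s^2*co + 2*co - 2*co^3/3 = 4 * co^3 / 3"
  proof -
    have "- 2* s^2*co + 2*co = 2*co*(1 - s^2)" by (simp add: algebra_simps)
    also have "... = 2*co*co^2" using cs by simp
    finally show ?thesis by (simp add: power3_eq_cube power2_eq_square)
  qed
  have e3: "(- 2* s^2*co - s*p*r/c + 2*co - 2*co^3/3) = 4 * co^3 / 3 - s*p*r/c"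
    using e2 by simp
  show ?thesis unfolding e1 e3 using s c p by (simp add: field_simps power2_eq_square power3_eq_cube)
qed

definition fth :: "real \<Rightarrow> real" where "fth \<theta> = \<theta> + cot \<theta> * (1 - cos \<theta> ^ 2 / 3)"

lemma Dq_star:
  assumes r: "r > 0" and c: "c > 0" and t: "0 < t" "t < pi/2" and f: "fth t = pi/2 + pi*r/(2*c)"
  shows "Dq r c (2 * sin t) = 0"
proof -
  define s where "s = sin t"
  define co where "co = cos t"
  have s0: "s > 0" unfolding s_def using t by (intro sin_gt_zero) auto
  have c0: "co > 0" unfolding co_def using t by (intro cos_gt_zero_pi) auto
  have cs: "co^2 = 1 - s^2" unfolding co_def s_def by (simp add: cos_squared_eq)
  have eq: "4 - (2* s)^2 = (2*co)^2" using cs by (simp add: power2_eq_square algebra_simps)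
  have S2: "S (2* s) = 2*co" by (simp only: S_def eq real_sqrt_abs) (use c0 in simp)
  have AS2: "AS (2* s) = t" unfolding AS_def s_def using t by (simp add: arcsin_sin)
  have th: "t = pi/2 + pi*r/(2*c) - (co/s)*(1 - co^2/3)"
    using f unfolding fth_def cot_def co_def s_def by simp
  have 4: "4 - (2* s)^2 = 4*co^2" using cs by (simp add: power2_eq_square algebra_simps)
  have "Dq r c (2 * s) = 4*r* s + c*(-2*((4*co^2*(2*co)/3)/pi) + 2*(2* s)*((pi - (2* s*(2*co)/2 + 2*t))/pi))"
    unfolding Dq_def q0_def q1_def A0_2 A1_2 unfolding A0_def A1_def S2 AS2 4 by simp
  also have "... = 0" by (rule alg2[OF s0 c pi_gt_zero cs th])
  finally show ?thesis unfolding s_def .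
qed

lemma Q0_closed: assumes "0 \<le> x" "x < 2"
  shows "Q0 x = 1 - x / (2 * pi) * sqrt (4 - x\<^sup>2) - 2 / pi * arctan (x / sqrt (4 - x\<^sup>2))"
proof -
  have a: "-1 < x/2" "x/2 < 1" using assms by auto
  have e: "1 - (x/2)^2 = (4-x^2)/4" by (simp add: field_simps power2_eq_square)
  have "sqrt (1 - (x/2)^2) = sqrt (4-x^2) / 2" by (simp only: e real_sqrt_divide) simp
  then have q: "(x/2) / sqrt (1 - (x/2)^2) = x / sqrt (4-x^2)" by simp
  have as: "AS x = arctan (x / sqrt (4 - x\<^sup>2))" by (simp only: AS_def arcsin_arctan[OF a] q)
  show ?thesis using assms unfolding Q0_eq[OF assms(1) less_imp_le[OF assms(2)]] A0_2 A0_def as S_def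
    by (simp add: field_simps AS_def)
qed

lemma powr32: "0 \<le> (y::real) \<Longrightarrow> y powr (3/2) = y * sqrt y"
proof (cases "y = 0")
  case False
  assume "0 \<le> y"
  then have "y > 0" using False by simp
  then have "y powr (3/2) = y powr (1 + 1/2)" by simp
  also have "... = y powr 1 * y powr (1/2)" by (rule powr_add)
  also have "... = y * sqrt y" using \<open>y > 0\<close> by (simp add: powr_half_sqrt)
  finally show ?thesis .
qed simp

lemma Q1_closed: assumes "0 \<le> x" "x \<le> 2"
  shows "Q1 x = 1 / (3 * pi) * (4 - x\<^sup>2) powr (3/2)"
proof -
  have "(4 - x\<^sup>2) powr (3/2) = (4 - x\<^sup>2) * sqrt (4 - x\<^sup>2)" using powr32 sq_aux2[of x] assms by simp
  then show ?thesis unfolding Q1_eq[OF assms] A1_2 A1_def S_def by simp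
qed

lemma Q2_closed: assumes "0 \<le> x" "x \<le> 2"
  shows "Q2 x = 1 - 1 / (4 * pi) * x * sqrt (4 - x\<^sup>2) * (x\<^sup>2 - 2) - 2 / pi * arcsin (x / 2)"
  unfolding Q2_eq[OF assms] A2_2 A2_def S_def AS_def using assms
  by (simp add: field_simps)
lemma alg_aux: fixes s c :: real assumes s: "s \<noteq> 0" and c: "c^2 = 1 - s^2"
  shows "1 + (-inverse (s^2) * (1 - c^2/3) + (-(2*c*(-s))/3) * (c/s)) = -(2/3)*c^4/s^2"
proof -
  have e1: "(-(2*c*(-s))/3) * (c/s) = 2*c^2/3" using s by (simp add: field_simps power2_eq_square)
  have c4: "c^4 = (1-s^2)^2" using c by (metis power_mult numeral_times_numeral semiring_norm(12) num_double power2_eq_square)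
  show ?thesis unfolding e1 c4 c using s by (simp add: field_simps power2_eq_square)
qed

lemma fth_deriv: assumes "sin x \<noteq> 0"
  shows "(fth has_real_derivative - (2/3) * cos x ^ 4 / sin x ^ 2) (at x)"
proof -
  have dc: "(cot has_real_derivative -inverse ((sin x)\<^sup>2)) (at x)" using DERIV_cot[OF assms] .
  have d1: "((\<lambda>x. 1 - cos x ^ 2 / 3) has_real_derivative (- (2 * cos x * (- sin x)) / 3)) (at x)"
    by (auto intro!: derivative_eq_intros)
  have "(fth has_real_derivative 1 + (-inverse ((sin x)\<^sup>2) * (1 - cos x ^ 2 / 3) + (- (2 * cos x * (- sin x)) / 3) * cot x)) (at x)"
    unfolding fth_def[abs_def] by (rule DERIV_add[OF DERIV_ident DERIV_mult[OF dc d1]])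
  moreover have "1 + (-inverse ((sin x)\<^sup>2) * (1 - cos x ^ 2 / 3) + (- (2 * cos x * (- sin x)) / 3) * cot x) = - (2/3) * cos x ^ 4 / sin x ^ 2"
  proof -
    have c: "cos x ^ 2 = 1 - sin x ^ 2" by (simp add: cos_squared_eq)
    show ?thesis using alg_aux[OF assms c] unfolding cot_def by simp
  qed
  ultimately show ?thesis by simp
qed

lemma sin_pos_half: "0 < x \<Longrightarrow> x \<le> pi/2 \<Longrightarrow> sin x > 0"
  by (rule sin_gt_zero) auto

lemma fth_cont: assumes "0 < a" "b \<le> pi/2" shows "continuous_on {a..b} fth"
proof (rule continuous_at_imp_continuous_on, intro ballI)
  fix x assume "x \<in> {a..b}"
  then have "sin x \<noteq> 0" using sin_pos_half[of x] assms by auto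
  then show "isCont fth x" using fth_deriv DERIV_isCont by blast
qed

lemma fth_anti: "strict_antimono_on {0<..pi/2} fth"
proof (unfold monotone_on_def, intro ballI impI)
  fix a b assume a: "a \<in> {0<..pi/2}" and b: "b \<in> {0<..pi/2}" and ab: "a < b"
  show "fth b < fth a"
  proof (rule DERIV_neg_imp_decreasing_open[OF ab])
    fix x assume x: "a < x" "x < b"
    then have sx: "sin x > 0" using a b sin_pos_half[of x] by auto
    have "cos x > 0" using x a b by (intro cos_gt_zero_pi) auto
    then have "- (2/3) * cos x ^ 4 / sin x ^ 2 < 0" using sx by (simp add: divide_neg_pos)
    then show "\<exists>y. (fth has_real_derivative y) (at x) \<and> y < 0" using fth_deriv[of x] sx by (intro exI[of _ "- (2/3) * cos x ^ 4 / sin x ^ 2"]) auto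
  next
    show "continuous_on {a..b} fth" using a b by (intro fth_cont) auto
  qed
qed

lemma fth_0: "fth 0 = 0" unfolding fth_def by simp
lemma fth_pi2: "fth (pi/2) = pi/2" unfolding fth_def by (simp add: cot_def)

lemma fth_exists: assumes R: "R > pi/2" shows "\<exists>\<theta>\<in>{0<..pi/2}. fth \<theta> = R"
proof -
  define t0 where "t0 = arctan (2 / (3 * R))"
  have Rp: "R > 0" using R pi_gt_zero by linarith
  have t0p: "0 < t0" unfolding t0_def using Rp by (simp add: zero_less_arctan_iff)
  have t0l: "t0 < pi/2" unfolding t0_def using arctan_ubound by blast
  have st: "sin t0 > 0" using t0p t0l sin_pos_half by auto
  have ct: "cos t0 > 0" using t0p t0l by (intro cos_gt_zero_pi) auto
  have "tan t0 = 2 / (3 * R)" unfolding t0_def by (rule tan_arctan)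
  then have cot0: "cot t0 = 3 * R / 2" using st ct Rp unfolding cot_def tan_def by (simp add: field_simps)
  have "cos t0 ^ 2 \<le> 1" by (simp add: cos_squared_eq)  
  then have "R \<le> cot t0 * (1 - cos t0 ^ 2 / 3)" unfolding cot0 using Rp by (simp add: field_simps)
  then have fa: "R \<le> fth t0" unfolding fth_def using t0p by linarith
  have fb: "fth (pi/2) \<le> R" using fth_pi2 R by simp
  obtain x where x: "t0 \<le> x" "x \<le> pi/2" "fth x = R"
    using IVT2'[of fth "pi/2" R t0] fa fb t0l fth_cont[OF t0p] by auto
  then show ?thesis using t0p by (intro bexI[of _ x]) auto
qed

definition Gq :: "real \<Rightarrow> real \<Rightarrow> real \<Rightarrow> real" where
  "Gq r c L = r * L\<^sup>2 + c * (Q2 \<bar>L\<bar> - 2 * L * Q1 \<bar>L\<bar> + L\<^sup>2 * Q0 \<bar>L\<bar>)"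

lemma Gq_Fq: "0 \<le> L \<Longrightarrow> L \<le> 2 \<Longrightarrow> Gq r c L = Fq r c L"
  unfolding Gq_def Fq_def using Q0_eq[of L] Q1_eq[of L] Q2_eq[of L] by (simp add: q0_def q1_def q2_def)

lemma q1_pos: assumes "0 \<le> y" "y < 2" shows "q1 y > 0"
proof -
  have p: "0 < 4 - y^2" using sq_aux assms by auto
  then have "S y > 0" unfolding S_def by simp
  then show ?thesis unfolding q1_def A1_2 A1_def using p by simp
qed

lemma Q1_nn: assumes "0 \<le> y" shows "0 \<le> Q1 y"
proof (cases "y \<le> 2")
  case True
  show ?thesis
  proof (cases "y = 2")
    case True then show ?thesis unfolding Q1_def by simp
  next
    case False then show ?thesis using q1_pos[of y] Q1_eq[of y] assms \<open>y \<le> 2\<close> unfolding q1_def by simp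
  qed
next
  case False then show ?thesis using Q_big[of y] by simp
qed

lemma Fq2: "Fq r c 2 = 4 * r"
  unfolding Fq_def q0_def q1_def q2_def by simp

lemma Gq_min_nonneg: assumes r: "r > 0" and c: "c > 0" and Ls: "0 < Ls" "Ls < 2" and D0: "Dq r c Ls = 0"
  and L: "0 \<le> L" "L \<noteq> Ls"
  shows "Gq r c Ls < Gq r c L"
proof (cases "L \<le> 2")
  case True
  then show ?thesis using Fq_min[OF r c Ls D0 L(1) True L(2)] Gq_Fq[of L] Gq_Fq[of Ls] L Ls by simp
next
  case False
  have "Gq r c Ls < Fq r c 2" using Fq_min[OF r c Ls D0, of 2] Gq_Fq[of Ls] Ls by simp
  also have "... = 4 * r" by (rule Fq2)
  also have "4 * r < r * L^2"
  proof -
    have "4 < L^2" using False absle[of L] by auto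
    then show ?thesis using r by simp
  qed
  also have "r * L^2 = Gq r c L" unfolding Gq_def using Q_big[of "\<bar>L\<bar>"] False by simp
  finally show ?thesis .
qed

lemma Gq_min: assumes r: "r > 0" and c: "c > 0" and Ls: "0 < Ls" "Ls < 2" and D0: "Dq r c Ls = 0"
  and L: "L \<noteq> Ls"
  shows "Gq r c Ls < Gq r c L"
proof (cases "0 \<le> L")
  case True show ?thesis using Gq_min_nonneg[OF r c Ls D0 True L] .
next
  case False
  have diff: "Gq r c L = Gq r c (-L) + 4 * c * (-L) * Q1 (-L)"
    unfolding Gq_def using False by (simp add: algebra_simps)
  have nn: "0 \<le> 4 * c * (-L) * Q1 (-L)" using c False Q1_nn[of "-L"] by (intro mult_nonneg_nonneg) auto
  show ?thesis
  proof (cases "-L = Ls")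
    case True
    have "Q1 Ls > 0" using q1_pos[of Ls] Q1_eq[of Ls] Ls unfolding q1_def by simp
    then have "0 < 4 * c * (-L) * Q1 (-L)" using True c Ls by simp
    then show ?thesis using diff True by simp
  next
    case False
    have "Gq r c Ls < Gq r c (-L)" using Gq_min_nonneg[OF r c Ls D0 _ False] \<open>\<not> 0 \<le> L\<close> by simp
    then show ?thesis using diff nn by linarith
  qed
qed

theorem theorem5:
  fixes \<rho> \<alpha> :: real
  assumes "0 < \<rho>" and "\<rho> < 1" and "\<alpha> \<in> {1/2, 1}"
  shows
    "(\<forall>\<Lambda>\<in>{0..2}. M_risk \<Lambda> \<rho> \<rho> \<alpha> =
        \<rho> * (2 - \<rho>) + (1 - \<rho>) * (\<rho> * \<Lambda>\<^sup>2 + \<alpha> * (1 - \<rho>) *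
          (Q2 \<Lambda> - 2 * \<Lambda> * Q1 \<Lambda> + \<Lambda>\<^sup>2 * Q0 \<Lambda>)))
   \<and> (\<forall>x\<in>{0..<2}. Q0 x = 1 - x / (2 * pi) * sqrt (4 - x\<^sup>2)
                          - 2 / pi * arctan (x / sqrt (4 - x\<^sup>2)))
   \<and> (\<forall>x\<in>{0..2}. Q1 x = 1 / (3 * pi) * (4 - x\<^sup>2) powr (3/2))
   \<and> (\<forall>x\<in>{0..2}. Q2 x = 1 - 1 / (4 * pi) * x * sqrt (4 - x\<^sup>2) * (x\<^sup>2 - 2)
                          - 2 / pi * arcsin (x / 2))
   \<and> (\<exists>!\<theta>. \<theta> \<in> {0..pi/2} \<and>
        \<theta> + cot \<theta> * (1 - cos \<theta> ^ 2 / 3) = pi * (1 + \<rho> / \<alpha> - \<rho>) / (2 * (1 - \<rho>)))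
   \<and> (\<forall>\<theta>. \<theta> \<in> {0..pi/2} \<and>
        \<theta> + cot \<theta> * (1 - cos \<theta> ^ 2 / 3) = pi * (1 + \<rho> / \<alpha> - \<rho>) / (2 * (1 - \<rho>))
        \<longrightarrow> (\<forall>\<Lambda>. M_risk (2 * sin \<theta>) \<rho> \<rho> \<alpha> \<le> M_risk \<Lambda> \<rho> \<rho> \<alpha>)
          \<and> (\<forall>\<Lambda>. M_risk \<Lambda> \<rho> \<rho> \<alpha> = M_risk (2 * sin \<theta>) \<rho> \<rho> \<alpha> \<longrightarrow> \<Lambda> = 2 * sin \<theta>))
   \<and> strict_antimono_on {0<..pi/2} (\<lambda>\<theta>. \<theta> + cot \<theta> * (1 - cos \<theta> ^ 2 / 3))"
proof -
  have a0: "\<alpha> > 0" using assms(3) by auto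
  define c where "c = \<alpha> * (1 - \<rho>)"
  have c0: "c > 0" unfolding c_def using a0 assms by simp
  define R where "R = pi * (1 + \<rho> / \<alpha> - \<rho>) / (2 * (1 - \<rho>))"
  have Req: "R = pi/2 + pi*\<rho>/(2*c)" unfolding R_def c_def using a0 assms(2) by (simp add: field_simps)
  have "pi*\<rho>/(2*c) > 0" using c0 assms by simp
  then have Rgt: "R > pi/2" unfolding Req by simp
  have fthE: "\<And>\<theta>. \<theta> + cot \<theta> * (1 - cos \<theta> ^ 2 / 3) = fth \<theta>" by (simp add: fth_def)
  have sol: "0 < \<theta> \<and> \<theta> < pi/2" if "\<theta> \<in> {0..pi/2}" "fth \<theta> = R" for \<theta>
  proof -
    have "\<theta> \<noteq> 0" using that Rgt fth_0 pi_gt_zero by auto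
    moreover have "\<theta> \<noteq> pi/2"
    proof
      assume "\<theta> = pi/2"
      then show False using that Rgt fth_pi2 by (simp only:)
    qed
    ultimately show ?thesis using that by auto
  qed
  have MG: "M_risk L \<rho> \<rho> \<alpha> = \<rho> * (2 - \<rho>) + (1 - \<rho>) * Gq \<rho> c L" for L
    unfolding M_eq[OF assms(1,2)] Gq_def c_def by (simp add: algebra_simps)
  have P1: "\<forall>\<Lambda>\<in>{0..2}. M_risk \<Lambda> \<rho> \<rho> \<alpha> =
        \<rho> * (2 - \<rho>) + (1 - \<rho>) * (\<rho> * \<Lambda>\<^sup>2 + \<alpha> * (1 - \<rho>) *
          (Q2 \<Lambda> - 2 * \<Lambda> * Q1 \<Lambda> + \<Lambda>\<^sup>2 * Q0 \<Lambda>))"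
    using M_eq[OF assms(1,2)] by simp
  have P2: "\<forall>x\<in>{0..<2}. Q0 x = 1 - x / (2 * pi) * sqrt (4 - x\<^sup>2)
                          - 2 / pi * arctan (x / sqrt (4 - x\<^sup>2))"
    using Q0_closed by auto
  have P3: "\<forall>x\<in>{0..2}. Q1 x = 1 / (3 * pi) * (4 - x\<^sup>2) powr (3/2)"
    using Q1_closed by auto
  have P4: "\<forall>x\<in>{0..2}. Q2 x = 1 - 1 / (4 * pi) * x * sqrt (4 - x\<^sup>2) * (x\<^sup>2 - 2)
                          - 2 / pi * arcsin (x / 2)"
    using Q2_closed by auto
  have P5: "\<exists>!\<theta>. \<theta> \<in> {0..pi/2} \<and> fth \<theta> = R"
  proof -
    obtain \<theta> where t: "\<theta> \<in> {0<..pi/2}" "fth \<theta> = R" using fth_exists[OF Rgt] by blast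
    show ?thesis
    proof (rule ex1I[of _ \<theta>])
      show "\<theta> \<in> {0..pi/2} \<and> fth \<theta> = R" using t by auto
    next
      fix y assume y: "y \<in> {0..pi/2} \<and> fth y = R"
      then have y0: "y \<in> {0<..pi/2}" using sol[of y] by auto
      show "y = \<theta>"
      proof (rule ccontr)
        assume "y \<noteq> \<theta>"
        then consider "y < \<theta>" | "\<theta> < y" by linarith
        then show False
        proof cases
          case 1 then have "fth \<theta> < fth y" using fth_anti y0 t(1) unfolding monotone_on_def by blast
          then show False using y t by simp
        next
          case 2 then have "fth y < fth \<theta>" using fth_anti y0 t(1) unfolding monotone_on_def by blast
          then show False using y t by simp
        qed
      qed
    qed
  qed
  have P6: "\<forall>\<theta>. \<theta> \<in> {0..pi/2} \<and> fth \<theta> = R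
        \<longrightarrow> (\<forall>\<Lambda>. M_risk (2 * sin \<theta>) \<rho> \<rho> \<alpha> \<le> M_risk \<Lambda> \<rho> \<rho> \<alpha>)
          \<and> (\<forall>\<Lambda>. M_risk \<Lambda> \<rho> \<rho> \<alpha> = M_risk (2 * sin \<theta>) \<rho> \<rho> \<alpha> \<longrightarrow> \<Lambda> = 2 * sin \<theta>)"
  proof (intro allI impI)
    fix \<theta> assume th: "\<theta> \<in> {0..pi/2} \<and> fth \<theta> = R"
    then have t: "0 < \<theta>" "\<theta> < pi/2" using sol by auto
    have s0: "sin \<theta> > 0" using t by (intro sin_gt_zero) auto
    have co: "cos \<theta> > 0" using t by (intro cos_gt_zero_pi) auto
    have "sin \<theta> ^ 2 < 1" using co by (simp add: sin_squared_eq)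
    then have s1: "sin \<theta> < 1" by (metis abs_square_less_1 abs_less_iff)
    define Ls where "Ls = 2 * sin \<theta>"
    have Ls: "0 < Ls" "Ls < 2" unfolding Ls_def using s0 s1 by auto
    have D0: "Dq \<rho> c Ls = 0" unfolding Ls_def
      by (rule Dq_star[OF assms(1) c0 t]) (use th Req in simp)
    have strict: "Gq \<rho> c Ls < Gq \<rho> c L" if "L \<noteq> Ls" for L
      by (rule Gq_min[OF assms(1) c0 Ls D0 that])
    have om: "1 - \<rho> > 0" using assms by simp
    show "(\<forall>\<Lambda>. M_risk (2 * sin \<theta>) \<rho> \<rho> \<alpha> \<le> M_risk \<Lambda> \<rho> \<rho> \<alpha>)
          \<and> (\<forall>\<Lambda>. M_risk \<Lambda> \<rho> \<rho> \<alpha> = M_risk (2 * sin \<theta>) \<rho> \<rho> \<alpha> \<longrightarrow> \<Lambda> = 2 * sin \<theta>)"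
    proof (intro conjI allI impI)
      fix L
      show "M_risk (2 * sin \<theta>) \<rho> \<rho> \<alpha> \<le> M_risk L \<rho> \<rho> \<alpha>"
      proof (cases "L = Ls")
        case True then show ?thesis unfolding Ls_def by simp
      next
        case False
        then have "Gq \<rho> c Ls < Gq \<rho> c L" by (rule strict)
        then have "(1-\<rho>) * Gq \<rho> c Ls < (1-\<rho>) * Gq \<rho> c L" using om by simp
        then show ?thesis unfolding MG Ls_def[symmetric] by simp
      qed
    next
      fix L assume eq: "M_risk L \<rho> \<rho> \<alpha> = M_risk (2 * sin \<theta>) \<rho> \<rho> \<alpha>"
      show "L = 2 * sin \<theta>"
      proof (rule ccontr)
        assume "L \<noteq> 2 * sin \<theta>"
        then have "Gq \<rho> c Ls < Gq \<rho> c L" using strict Ls_def by simp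
        then have "(1-\<rho>) * Gq \<rho> c Ls < (1-\<rho>) * Gq \<rho> c L" using om by simp
        then show False using eq unfolding MG Ls_def[symmetric] by simp
      qed
    qed
  qed
  have P7: "strict_antimono_on {0<..pi/2} fth" by (rule fth_anti)
  show ?thesis unfolding fthE R_def[symmetric] using P1 P2 P3 P4 P5 P6 P7 by blast
qed

end
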